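(* Let $(\Omega,\mathcal{F},P)$ be a probability space and $X$ a scalar random variable with distribution $\pi$ and upper bound $\ell\in\mathbb{R}$ with $\mathbb{P}_\pi[X\le \ell]=1$. Let $g$ be a closed convex function with $g(1)=0$, let $\beta\ge 0$, and let $\mathrm{ER}_{g,\beta}$ be the $g$-entropic risk measure with divergence level $\beta$. Suppose the convex conjugate $g^*$ of $g$ is real-valued, $g^*:\mathbb{R}\to\mathbb{R}$. Define $L(x,\mu,t) = t\left(\mu + g^*\left(\frac{x}{t}-\mu+\beta\right)\right)$ and suppose $u_b: D\subset\mathbb{R}^2\to\mathbb{R}$ is a function with $\mathbb{P}_{\pi}[L(X,\mu,t)\le u_b(\mu,t)] = 1$ for all $\mu\in\mathbb{R}$, $t>0$. For $N$ independent samples $x_1,\dots,x_N$ of $X$, let $\zeta^*_N(\mu,t)=\max_{1\le k\le N} L(x_k,\mu,t)$ (the solution of $\min_\zeta \zeta$ s.t. $\zeta\ge L(x_i,\mu,t)$ for all $i$). Then for all $\epsilon\in[0,1]$, \[ \mathbb{P}^N_{\pi}\left[\mathrm{ER}_{g,\beta}(X) \le \inf_{t>0,\ \mu\in\mathbb{R}} \zeta^*_N(\mu,t)(1-\epsilon) + u_b(\mu,t)\epsilon\right] \ge 1-(1-\epsilon)^N. \]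
   Context: The $g$-entropic risk measure with divergence level $\beta$ is $\mathrm{ER}_{g,\beta}(X) = \sup_{Q\in\mathcal{P}} \mathbb{E}_Q[X]$, where $\mathcal{P} = \{Q : Q \ll P,\ \int g(\frac{dQ}{dP})\,dP \le \beta\}$, $Q\ll P$ denotes absolute continuity and $\frac{dQ}{dP}$ the Radon–Nikodym derivative. The convex conjugate is $g^*(y)=\sup_x(xy-g(x))$. $\mathbb{P}^N_{\pi}$ is the $N$-fold product measure governing the i.i.d. sample. *)

theory Defs
  imports "HOL-Probability.Probability"
begin

definition epigraph :: "(real \<Rightarrow> ereal) \<Rightarrow> (real \<times> real) set" where
  "epigraph g = {(x, r). g x \<le> ereal r}"

definition closed_convex_fun :: "(real \<Rightarrow> ereal) \<Rightarrow> bool" where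
  "closed_convex_fun g \<longleftrightarrow> convex (epigraph g) \<and> closed (epigraph g) \<and> (\<forall>x. g x \<noteq> -\<infinity>)"

definition conj_fun :: "(real \<Rightarrow> ereal) \<Rightarrow> real \<Rightarrow> ereal" where
  "conj_fun g y = (SUP x. ereal (x * y) - g x)"

definition ext_integral :: "'a measure \<Rightarrow> ('a \<Rightarrow> ereal) \<Rightarrow> ereal" where
  "ext_integral M h = enn2ereal (\<integral>\<^sup>+ w. e2ennreal (h w) \<partial>M) - enn2ereal (\<integral>\<^sup>+ w. e2ennreal (- h w) \<partial>M)"

definition g_div :: "(real \<Rightarrow> ereal) \<Rightarrow> 'a measure \<Rightarrow> 'a measure \<Rightarrow> ereal" where
  "g_div g P Q = ext_integral P (\<lambda>w. g (enn2real (RN_deriv P Q w)))"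

definition ambiguity_set :: "(real \<Rightarrow> ereal) \<Rightarrow> real \<Rightarrow> 'a measure \<Rightarrow> 'a measure set" where
  "ambiguity_set g \<beta> P = {Q. sets Q = sets P \<and> prob_space Q \<and> absolutely_continuous P Q \<and> g_div g P Q \<le> ereal \<beta>}"

definition entropic_risk :: "(real \<Rightarrow> ereal) \<Rightarrow> real \<Rightarrow> 'a measure \<Rightarrow> ('a \<Rightarrow> real) \<Rightarrow> ereal" where
  "entropic_risk g \<beta> P X = (SUP Q \<in> ambiguity_set g \<beta> P. ext_integral Q (\<lambda>w. ereal (X w)))"

definition Lfun :: "(real \<Rightarrow> ereal) \<Rightarrow> real \<Rightarrow> real \<Rightarrow> real \<Rightarrow> real \<Rightarrow> real" where
  "Lfun g \<beta> x \<mu> t = t * (\<mu> + real_of_ereal (conj_fun g (x / t - \<mu> + \<beta>)))"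

end

theory Submission
  imports Defs
begin

lemma FY:
  assumes conj: "\<forall>y. \<bar>conj_fun g y\<bar> \<noteq> \<infinity>" and gx: "g x = ereal r"
  shows "x * y - r \<le> real_of_ereal (conj_fun g y)"
proof -
  have "ereal (x * y) - g x \<le> conj_fun g y" unfolding conj_fun_def by (rule SUP_upper) auto
  then have "ereal (x * y - r) \<le> conj_fun g y" using gx by simp
  moreover have "conj_fun g y = ereal (real_of_ereal (conj_fun g y))"
    using conj by (metis ereal_real')
  ultimately show ?thesis by (metis ereal_less_eq(3))
qed

lemma g_lower:
  assumes conj: "\<forall>y. \<bar>conj_fun g y\<bar> \<noteq> \<infinity>" and ng: "g x \<noteq> -\<infinity>"
  shows "ereal (- real_of_ereal (conj_fun g 0)) \<le> g x"
proof (cases "g x")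
  case (real r)
  from FY[OF conj real, of 0] show ?thesis using real by simp
qed (use ng in auto)

lemma conj_convex:
  assumes conj: "\<forall>y. \<bar>conj_fun g y\<bar> \<noteq> \<infinity>" and ng: "\<forall>x. g x \<noteq> -\<infinity>"
  shows "convex_on UNIV (\<lambda>y. real_of_ereal (conj_fun g y))"
proof (rule convex_onI)
  fix a y1 y2 :: real assume a: "0 < a" "a < 1"
  let ?C = "\<lambda>y. real_of_ereal (conj_fun g y)"
  have "conj_fun g ((1 - a) *\<^sub>R y1 + a *\<^sub>R y2) \<le> ereal ((1 - a) * ?C y1 + a * ?C y2)"
    unfolding conj_fun_def[of g "(1 - a) *\<^sub>R y1 + a *\<^sub>R y2"]
  proof (rule SUP_least)
    fix x
    show "ereal (x * ((1 - a) *\<^sub>R y1 + a *\<^sub>R y2)) - g x \<le> ereal ((1 - a) * ?C y1 + a * ?C y2)"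
    proof (cases "g x")
      case (real r)
      have 1: "x * y1 - r \<le> ?C y1" by (rule FY[OF conj real])
      have 2: "x * y2 - r \<le> ?C y2" by (rule FY[OF conj real])
      have "x * ((1 - a) * y1 + a * y2) - r = (1 - a) * (x * y1 - r) + a * (x * y2 - r)"
        by (simp add: algebra_simps)
      also have "\<dots> \<le> (1 - a) * ?C y1 + a * ?C y2"
        using 1 2 a by (intro add_mono mult_left_mono) auto
      finally show ?thesis using real by simp
    qed (use ng in auto)
  qed
  moreover have "conj_fun g ((1 - a) *\<^sub>R y1 + a *\<^sub>R y2) = ereal (?C ((1 - a) *\<^sub>R y1 + a *\<^sub>R y2))"
    using conj by (metis ereal_real')
  ultimately show "?C ((1 - a) *\<^sub>R y1 + a *\<^sub>R y2) \<le> (1 - a) * ?C y1 + a * ?C y2"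
    by (metis ereal_less_eq(3))
qed simp

lemma conj_cont:
  assumes conj: "\<forall>y. \<bar>conj_fun g y\<bar> \<noteq> \<infinity>" and ng: "\<forall>x. g x \<noteq> -\<infinity>"
  shows "continuous_on UNIV (\<lambda>y. real_of_ereal (conj_fun g y))"
  by (rule convex_on_continuous[OF open_UNIV conj_convex[OF assms]])

lemma Lfun_cont:
  assumes conj: "\<forall>y. \<bar>conj_fun g y\<bar> \<noteq> \<infinity>" and ng: "\<forall>x. g x \<noteq> -\<infinity>" and t: "t \<noteq> 0"
  shows "continuous_on UNIV (\<lambda>x. Lfun g \<beta> x \<mu> t)"
proof -
  have c: "continuous_on UNIV (\<lambda>x. x / t - \<mu> + \<beta>)" using t by (intro continuous_intros) auto
  have "continuous_on UNIV ((\<lambda>y. real_of_ereal (conj_fun g y)) \<circ> (\<lambda>x. x / t - \<mu> + \<beta>))"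
    by (rule continuous_on_compose[OF c]) (rule continuous_on_subset[OF conj_cont[OF conj ng]], simp)
  then have "continuous_on UNIV (\<lambda>x. t * (\<mu> + real_of_ereal (conj_fun g (x / t - \<mu> + \<beta>))))"
    by (intro continuous_intros) (simp add: o_def)
  then show ?thesis unfolding Lfun_def .
qed

lemma g_meas:
  assumes g: "closed_convex_fun g"
  shows "g \<in> borel_measurable borel"
proof (rule borel_measurableI_le)
  fix y :: ereal
  show "{x \<in> space borel. g x \<le> y} \<in> sets borel"
  proof (cases y)
    case (real r)
    have "closed ((\<lambda>x. (x, r)) -` epigraph g)"
      using g unfolding closed_convex_fun_def
      by (intro closed_vimage continuous_intros) auto
    moreover have "{x \<in> space borel. g x \<le> y} = (\<lambda>x. (x, r)) -` epigraph g"
      using real by (auto simp: epigraph_def)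
    ultimately show ?thesis by simp
  next
    case PInf then show ?thesis by simp
  next
    case MInf
    then have "{x \<in> space borel. g x \<le> y} = {}" using g unfolding closed_convex_fun_def by auto
    then show ?thesis by simp
  qed
qed

lemma Max_cont:
  fixes f :: "'i \<Rightarrow> 'a::topological_space \<Rightarrow> real"
  assumes "finite K" "K \<noteq> {}" "\<And>k. k \<in> K \<Longrightarrow> continuous_on S (f k)"
  shows "continuous_on S (\<lambda>x. Max ((\<lambda>k. f k x) ` K))"
  using assms
proof (induction K rule: finite_ne_induct)
  case (singleton k) then show ?case by simp
next
  case (insert k K)
  have "continuous_on S (\<lambda>x. max (f k x) (Max ((\<lambda>k. f k x) ` K)))"
    using insert by (intro continuous_on_max) auto
  moreover have "\<And>x. Max ((\<lambda>k. f k x) ` insert k K) = max (f k x) (Max ((\<lambda>k. f k x) ` K))"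
    using insert by (simp add: Max_insert)
  ultimately show ?case by simp
qed


lemma enn2ereal_fin: "x \<noteq> \<infinity> \<Longrightarrow> enn2ereal x = ereal (enn2real x)"
  by (cases x) (auto simp: enn2real_def)

lemma ext_integral_real:
  fixes f :: "'a \<Rightarrow> real"
  assumes "f \<in> borel_measurable M" "(\<integral>\<^sup>+ x. ennreal (f x) \<partial>M) \<noteq> \<infinity>"
  shows "ext_integral M (\<lambda>w. ereal (f w)) = (if integrable M f then ereal (integral\<^sup>L M f) else -\<infinity>)"
proof (cases "integrable M f")
  case True
  then have "(\<integral>\<^sup>+ x. ennreal (- f x) \<partial>M) \<noteq> \<infinity>" using real_integrable_def by blast
  then show ?thesis using True assms
    by (simp add: ext_integral_def real_lebesgue_integral_def enn2ereal_fin)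
next
  case False
  then have "(\<integral>\<^sup>+ x. ennreal (- f x) \<partial>M) = \<infinity>" using real_integrable_def assms by blast
  then show ?thesis using False assms
    by (simp add: ext_integral_def enn2ereal_fin)
qed

lemma core:
  fixes P :: "'a measure" and X :: "'a \<Rightarrow> real" and g :: "real \<Rightarrow> ereal"
  assumes P: "prob_space P" and Xm[measurable]: "X \<in> borel_measurable P"
    and ell: "AE w in P. X w \<le> ell"
    and Q: "Q \<in> ambiguity_set g \<beta> P"
    and g: "closed_convex_fun g"
    and conj: "\<forall>y. \<bar>conj_fun g y\<bar> \<noteq> \<infinity>"
    and t: "0 < t"
    and ub: "AE w in P. Lfun g \<beta> (X w) \<mu> t \<le> u"
    and A[measurable]: "A \<in> sets P" and As: "\<forall>w\<in>A. X w \<le> s"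
  shows "ext_integral Q (\<lambda>w. ereal (X w)) \<le> ereal (measure P A * Lfun g \<beta> s \<mu> t + (1 - measure P A) * u)"
proof -
  interpret prob_space P by fact
  have sQ: "sets Q = sets P" and pQ: "prob_space Q" and ac: "absolutely_continuous P Q"
    and gd: "g_div g P Q \<le> ereal \<beta>"
    using Q by (auto simp: ambiguity_set_def)
  have ng: "\<forall>x. g x \<noteq> -\<infinity>" using g by (simp add: closed_convex_fun_def)
  have gm[measurable]: "g \<in> borel_measurable borel" by (rule g_meas[OF g])
  let ?D = "RN_deriv P Q"
  have Qd: "density P ?D = Q" by (rule density_RN_deriv[OF ac sQ])
  have fin: "AE w in P. ?D w \<noteq> \<infinity>"
    by (rule RN_deriv_finite[OF prob_space_imp_sigma_finite[OF pQ] ac sQ])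
  define Z where "Z w = enn2real (?D w)" for w
  have Zm[measurable]: "Z \<in> borel_measurable P" unfolding Z_def by measurable
  have Z0: "\<And>w. 0 \<le> Z w" unfolding Z_def by simp
  have QZ: "Q = density P (\<lambda>w. ennreal (Z w))"
  proof -
    have "density P ?D = density P (\<lambda>w. ennreal (Z w))"
      by (rule density_cong) (use fin in \<open>auto simp: Z_def less_top[symmetric]\<close>)
    then show ?thesis using Qd by simp
  qed
  have spQ: "space Q = space P" using sets_eq_imp_space_eq[OF sQ] .
  have Z1: "(\<integral>\<^sup>+ w. ennreal (Z w) \<partial>P) = 1"
  proof -
    have "emeasure Q (space P) = 1" using prob_space.emeasure_space_1[OF pQ] spQ by simp
    moreover have "emeasure Q (space P) = (\<integral>\<^sup>+ w. ennreal (Z w) \<partial>P)"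
      unfolding QZ by (subst emeasure_density) (auto intro!: nn_integral_cong)
    ultimately show ?thesis by simp
  qed
  have Zint: "integrable P Z"
    using Z1 Z0 by (auto simp: real_integrable_def ennreal_neg)
  have Zi1: "integral\<^sup>L P Z = 1"
    using nn_integral_eq_integral[OF Zint] Z0 Z1 by simp
  define c0 where "c0 = real_of_ereal (conj_fun g 0)"
  have glow: "\<And>x. ereal (- c0) \<le> g x" unfolding c0_def using g_lower[OF conj] ng by blast
  have gZm[measurable]: "(\<lambda>w. g (Z w)) \<in> borel_measurable P" by measurable
  have negfin: "(\<integral>\<^sup>+ w. e2ennreal (- g (Z w)) \<partial>P) \<noteq> \<infinity>"
  proof -
    have "(\<integral>\<^sup>+ w. e2ennreal (- g (Z w)) \<partial>P) \<le> (\<integral>\<^sup>+ w. ennreal c0 \<partial>P)"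
    proof (rule nn_integral_mono)
      fix w
      have "- g (Z w) \<le> ereal c0" using glow[of "Z w"] by (metis ereal_minus_le_minus uminus_ereal.simps(1) ereal_uminus_uminus)
      then have "e2ennreal (- g (Z w)) \<le> e2ennreal (ereal c0)" by (rule e2ennreal_mono)
      then show "e2ennreal (- g (Z w)) \<le> ennreal c0" by simp
    qed
    also have "\<dots> = ennreal c0" by (simp add: emeasure_space_1)
    finally show ?thesis by (auto simp: top_unique)
  qed
  have gd': "ext_integral P (\<lambda>w. g (Z w)) \<le> ereal \<beta>" using gd by (simp add: g_div_def Z_def)
  have posfin: "(\<integral>\<^sup>+ w. e2ennreal (g (Z w)) \<partial>P) \<noteq> \<infinity>"
  proof
    assume "(\<integral>\<^sup>+ w. e2ennreal (g (Z w)) \<partial>P) = \<infinity>"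
    then have "ext_integral P (\<lambda>w. g (Z w)) = \<infinity>"
      using negfin by (simp add: ext_integral_def enn2ereal_fin)
    then show False using gd' by simp
  qed
  have gfin: "AE w in P. g (Z w) \<noteq> \<infinity>"
  proof -
    have "AE w in P. e2ennreal (g (Z w)) \<noteq> \<infinity>"
      by (rule nn_integral_PInf_AE[OF _ posfin]) measurable
    then show ?thesis by eventually_elim auto
  qed
  define G where "G w = real_of_ereal (g (Z w))" for w
  have Gm[measurable]: "G \<in> borel_measurable P" unfolding G_def by measurable
  have gG: "AE w in P. g (Z w) = ereal (G w)"
    using gfin by eventually_elim (use ng in \<open>auto simp: G_def intro: ereal_real'[symmetric]\<close>)
  have Gpos: "(\<integral>\<^sup>+ w. ennreal (G w) \<partial>P) = (\<integral>\<^sup>+ w. e2ennreal (g (Z w)) \<partial>P)"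
    by (rule nn_integral_cong_AE) (use gG in \<open>eventually_elim, simp\<close>)
  have Gneg: "(\<integral>\<^sup>+ w. ennreal (- G w) \<partial>P) = (\<integral>\<^sup>+ w. e2ennreal (- g (Z w)) \<partial>P)"
    by (rule nn_integral_cong_AE) (use gG in \<open>eventually_elim, simp\<close>)
  have Gint: "integrable P G"
    using Gpos Gneg posfin negfin by (simp add: real_integrable_def)
  have "ext_integral P (\<lambda>w. ereal (G w)) = ext_integral P (\<lambda>w. g (Z w))"
    unfolding ext_integral_def
    by (intro arg_cong2[where f="(-)"] arg_cong[where f=enn2ereal] nn_integral_cong_AE)
       (use gG in \<open>eventually_elim, simp\<close>)+
  then have Gle: "integral\<^sup>L P G \<le> \<beta>"
    using gd' ext_integral_real[OF Gm] Gint Gpos posfin by simp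
  have XQm[measurable]: "X \<in> borel_measurable Q" using Xm measurable_cong_sets[OF sQ refl] by blast
  have ellQ: "AE w in Q. X w \<le> ell" by (rule absolutely_continuous_AE[OF sQ ac ell])
  have XQpos: "(\<integral>\<^sup>+ w. ennreal (X w) \<partial>Q) \<noteq> \<infinity>"
  proof -
    have "(\<integral>\<^sup>+ w. ennreal (X w) \<partial>Q) \<le> (\<integral>\<^sup>+ w. ennreal (max ell 0) \<partial>Q)"
      by (rule nn_integral_mono_AE) (use ellQ in \<open>eventually_elim, auto intro: ennreal_leI\<close>)
    also have "\<dots> = ennreal (max ell 0)" by (simp add: prob_space.emeasure_space_1[OF pQ])
    finally show ?thesis by (auto simp: top_unique)
  qed
  note extQ = ext_integral_real[OF XQm XQpos]
  show ?thesis
  proof (cases "integrable Q X")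
    case False
    then show ?thesis using extQ by simp
  next
    case True
    have intZX: "integrable P (\<lambda>w. Z w * X w)"
      using True unfolding QZ by (subst (asm) integrable_density) (auto simp: Z0)
    have eqZX: "integral\<^sup>L Q X = integral\<^sup>L P (\<lambda>w. Z w * X w)"
      unfolding QZ by (subst integral_density) (auto simp: Z0)
    define Cf where "Cf y = real_of_ereal (conj_fun g y)" for y
    define Ls where "Ls = Lfun g \<beta> s \<mu> t"
    define H where "H w = (if w \<in> A then Ls else Lfun g \<beta> (X w) \<mu> t)" for w
    have Lm[measurable]: "(\<lambda>x. Lfun g \<beta> x \<mu> t) \<in> borel_measurable borel"
      using t by (intro borel_measurable_continuous_onI Lfun_cont[OF conj ng]) auto
    have Hm[measurable]: "H \<in> borel_measurable P" unfolding H_def by measurable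
    have pw: "AE w in P. Z w * X w \<le> t*\<mu>*Z w - t*\<beta>*Z w + t*G w + H w - t*\<mu>"
      using gG
    proof eventually_elim
      case (elim w)
      define x' where "x' = (if w \<in> A then s else X w)"
      have 1: "Z w * X w \<le> Z w * x'" using As Z0[of w] by (auto simp: x'_def intro: mult_left_mono)
      have 2: "Z w * (x'/t - \<mu> + \<beta>) - G w \<le> Cf (x'/t - \<mu> + \<beta>)"
        unfolding Cf_def by (rule FY[OF conj elim])
      have 3: "H w = t * (\<mu> + Cf (x'/t - \<mu> + \<beta>))"
        by (simp add: H_def Ls_def Lfun_def x'_def Cf_def)
      have 4: "Z w * x' = t * (Z w * (x'/t - \<mu> + \<beta>)) + t*\<mu>*Z w - t*\<beta>*Z w"
        using t by (simp add: field_simps)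
      have 5: "t * (Z w * (x'/t - \<mu> + \<beta>) - G w) \<le> t * Cf (x'/t - \<mu> + \<beta>)"
        using 2 t by (intro mult_left_mono) auto
      show ?case using 1 3 4 5 by (simp add: algebra_simps)
    qed
    define lb where "lb w = Z w * X w - t*\<mu>*Z w + t*\<beta>*Z w - t*G w + t*\<mu>" for w
    have lbint: "integrable P lb" unfolding lb_def
      using intZX Zint Gint
      by (auto intro!: Bochner_Integration.integrable_add Bochner_Integration.integrable_diff Bochner_Integration.integrable_mult_right simp: emeasure_space_1)
    have Hlb: "AE w in P. lb w \<le> H w" using pw by eventually_elim (simp add: lb_def)
    have Hub: "AE w in P. H w \<le> max Ls u" using ub by eventually_elim (auto simp: H_def)
    have Hint: "integrable P H"
    proof (rule Bochner_Integration.integrable_bound)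
      show "integrable P (\<lambda>w. \<bar>lb w\<bar> + \<bar>max Ls u\<bar>)"
        using lbint by (auto intro!: Bochner_Integration.integrable_add integrable_abs simp: emeasure_space_1)
      show "AE w in P. norm (H w) \<le> norm (\<bar>lb w\<bar> + \<bar>max Ls u\<bar>)"
        using Hlb Hub by eventually_elim auto
    qed simp
    have "integral\<^sup>L P (\<lambda>w. Z w * X w) \<le> integral\<^sup>L P (\<lambda>w. t*\<mu>*Z w - t*\<beta>*Z w + t*G w + H w - t*\<mu>)"
      by (rule integral_mono_AE[OF intZX _ pw]) (use Zint Gint Hint in auto)
    also have "\<dots> = t*\<mu>*integral\<^sup>L P Z - t*\<beta>*integral\<^sup>L P Z + t*integral\<^sup>L P G + integral\<^sup>L P H - t*\<mu>"
      using Zint Gint Hint by (simp add: prob_space)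
    also have "\<dots> \<le> integral\<^sup>L P H"
      using Zi1 Gle t by (simp add: algebra_simps)
    also have "\<dots> \<le> integral\<^sup>L P (\<lambda>w. u + (Ls - u) * indicator A w)"
    proof (rule integral_mono_AE[OF Hint])
      show "integrable P (\<lambda>w. u + (Ls - u) * indicator A w)" by (auto intro!: Bochner_Integration.integrable_add Bochner_Integration.integrable_mult_right integrable_real_indicator simp: emeasure_space_1 less_top[symmetric])
      show "AE w in P. H w \<le> u + (Ls - u) * indicator A w"
        using ub by eventually_elim (auto simp: H_def)
    qed
    also have "\<dots> = u + (Ls - u) * measure P A"
    proof -
      have "integral\<^sup>L P (\<lambda>w. u + (Ls - u) * indicator A w) = integral\<^sup>L P (\<lambda>w. u) + integral\<^sup>L P (\<lambda>w. (Ls - u) * indicator A w)"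
        by (rule Bochner_Integration.integral_add)
           (auto intro!: Bochner_Integration.integrable_mult_right integrable_real_indicator simp: emeasure_space_1 less_top[symmetric])
      moreover have "A \<inter> space P = A" using A sets.sets_into_space by blast
      ultimately show ?thesis by (simp add: prob_space)
    qed
    finally have "integral\<^sup>L Q X \<le> measure P A * Ls + (1 - measure P A) * u"
      using eqZX by (simp add: algebra_simps)
    then show ?thesis using extQ True by (simp add: Ls_def)
  qed
qed

lemma cdf_bound:
  assumes rd: "real_distribution M" and c0: "0 \<le> c" and c1: "c \<le> 1"
  shows "measure M {x. cdf M x < c} \<le> c"
proof -
  interpret real_distribution M by fact
  let ?B = "{x. cdf M x < c}"
  have down: "\<And>x y. y \<in> ?B \<Longrightarrow> x \<le> y \<Longrightarrow> x \<in> ?B"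
    using cdf_nondecreasing by (auto intro: le_less_trans)
  show ?thesis
  proof (cases "c = 1")
    case True then show ?thesis using prob_le_1 by simp
  next
    case False
    then have c1': "c < 1" using c1 by simp
    from order_tendstoD(1)[OF cdf_lim_infty_prob c1'] obtain n where n: "c < cdf M (real n)"
      by (auto simp: eventually_sequentially)
    have bdd: "\<And>x. x \<in> ?B \<Longrightarrow> x < real n"
      using n cdf_nondecreasing by (metis (mono_tags) linorder_not_less mem_Collect_eq not_less_iff_gr_or_eq order.strict_trans2)
    show ?thesis
    proof (cases "?B = {}")
      case True then show ?thesis using c0 by simp
    next
      case ne: False
      have bddB: "bdd_above ?B" using bdd by (meson bdd_aboveI less_imp_le)
      define s where "s = Sup ?B"
      have ub: "\<And>x. x \<in> ?B \<Longrightarrow> x \<le> s" unfolding s_def using bddB by (simp add: cSup_upper)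
      show ?thesis
      proof (cases "s \<in> ?B")
        case True
        have "measure M ?B \<le> measure M {..s}"
          by (rule finite_measure_mono) (use ub in auto)
        also have "\<dots> = cdf M s" by (simp add: cdf_def2)
        finally show ?thesis using True by simp
      next
        case False
        have "measure M ?B \<le> measure M {..<s}"
          by (rule finite_measure_mono) (use ub False in \<open>auto simp: le_less\<close>)
        also have "measure M {..<s} \<le> c"
        proof (rule tendsto_le[OF trivial_limit_at_left_real tendsto_const cdf_at_left])
          have "eventually (\<lambda>x. x \<in> {s - 1<..<s}) (at_left s)" by (rule eventually_at_left_real) simp
          then show "eventually (\<lambda>x. cdf M x \<le> c) (at_left s)"
          proof eventually_elim
            case (elim x)
            then have "x < Sup ?B" unfolding s_def by simp
            then obtain b where "b \<in> ?B" "x < b" using less_cSup_iff[OF ne bddB] by blast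
            then have "x \<in> ?B" using down by auto
            then show ?case by simp
          qed
        qed
        finally show ?thesis .
      qed
    qed
  qed
qed


lemma closed_part:
  fixes g :: "real \<Rightarrow> ereal"
  assumes conj: "\<forall>y. \<bar>conj_fun g y\<bar> \<noteq> \<infinity>" and ng: "\<forall>x. g x \<noteq> -\<infinity>" and N: "N > 0"
  shows "closed {xs :: nat \<Rightarrow> real. (E::ereal) \<le> (INF p \<in> UNIV \<times> {0<..}.
                     ereal (Max ((\<lambda>k. Lfun g \<beta> (xs k) (fst p) (snd p)) ` {..<N}) * (1 - \<epsilon>)
                            + u_b (fst p) (snd p) * \<epsilon>))}"
proof -
  have eq: "{xs :: nat \<Rightarrow> real. E \<le> (INF p \<in> UNIV \<times> {0<..}.
                     ereal (Max ((\<lambda>k. Lfun g \<beta> (xs k) (fst p) (snd p)) ` {..<N}) * (1 - \<epsilon>)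
                            + u_b (fst p) (snd p) * \<epsilon>))}
     = (\<Inter>p \<in> UNIV \<times> {0<..}. {xs. E \<le> ereal (Max ((\<lambda>k. Lfun g \<beta> (xs k) (fst p) (snd p)) ` {..<N}) * (1 - \<epsilon>)
                            + u_b (fst p) (snd p) * \<epsilon>)})"
    by (auto simp: le_INF_iff)
  have cont: "continuous_on UNIV (\<lambda>xs::nat \<Rightarrow> real. Max ((\<lambda>k. Lfun g \<beta> (xs k) \<mu> t) ` {..<N}) * (1 - \<epsilon>) + c)"
    if t: "t > 0" for \<mu> t c
  proof -
    have "continuous_on UNIV (\<lambda>xs::nat \<Rightarrow> real. Max ((\<lambda>k. Lfun g \<beta> (xs k) \<mu> t) ` {..<N}))"
    proof (rule Max_cont)
      fix k
      have "continuous_on UNIV ((\<lambda>x. Lfun g \<beta> x \<mu> t) \<circ> (\<lambda>xs::nat \<Rightarrow> real. xs k))"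
        by (rule continuous_on_compose[OF continuous_on_product_coordinates])
           (rule continuous_on_subset[OF Lfun_cont[OF conj ng]], use t in auto)
      then show "continuous_on UNIV (\<lambda>xs::nat \<Rightarrow> real. Lfun g \<beta> (xs k) \<mu> t)" by (simp add: o_def)
    qed (use N in auto)
    then show ?thesis by (intro continuous_intros)
  qed
  show ?thesis unfolding eq
  proof (rule closed_INT, clarsimp)
    fix \<mu> t :: real assume t: "0 < t"
    show "closed {xs. E \<le> ereal (Max ((\<lambda>k. Lfun g \<beta> (xs k) \<mu> t) ` {..<N}) * (1 - \<epsilon>) + u_b \<mu> t * \<epsilon>)}"
    proof (cases E)
      case (real r)
      show ?thesis unfolding real ereal_less_eq
        by (rule closed_Collect_le[OF continuous_on_const cont[OF t]]) 
    qed auto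
  qed
qed


theorem theorem6:
  fixes P :: "'a measure" and X :: "'a \<Rightarrow> real" and g :: "real \<Rightarrow> ereal"
    and \<beta> ell \<epsilon> :: real and u_b :: "real \<Rightarrow> real \<Rightarrow> real" and N :: nat
  assumes "prob_space P"
    and "X \<in> borel_measurable P"
    and "AE x in distr P borel X. x \<le> ell"
    and "closed_convex_fun g" and "g 1 = 0"
    and "\<beta> \<ge> 0"
    and "\<forall>y. \<bar>conj_fun g y\<bar> \<noteq> \<infinity>"
    and "\<forall>\<mu>. \<forall>t>0. AE x in distr P borel X. Lfun g \<beta> x \<mu> t \<le> u_b \<mu> t"
    and "0 \<le> \<epsilon>" and "\<epsilon> \<le> 1"
  shows "measure (PiM {..<N} (\<lambda>_. distr P borel X))
           {xs \<in> space (PiM {..<N} (\<lambda>_. distr P borel X)).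
              entropic_risk g \<beta> P X
                \<le> (INF p \<in> UNIV \<times> {0<..}.
                     ereal (Max ((\<lambda>k. Lfun g \<beta> (xs k) (fst p) (snd p)) ` {..<N}) * (1 - \<epsilon>)
                            + u_b (fst p) (snd p) * \<epsilon>))}
         \<ge> 1 - (1 - \<epsilon>) ^ N"
proof -
  note Pp = assms(1) and Xm[measurable] = assms(2) and ellD = assms(3) and g = assms(4)
    and conj = assms(7) and ubD = assms(8) and e0 = assms(9) and e1 = assms(10)
  interpret P: prob_space P by (rule Pp)
  have ng: "\<forall>x. g x \<noteq> -\<infinity>" using g by (simp add: closed_convex_fun_def)
  define \<pi> where "\<pi> = distr P borel X"
  have rd: "real_distribution \<pi>" unfolding \<pi>_def by (rule P.real_distribution_distr) simp
  interpret \<pi>: real_distribution \<pi> by (rule rd)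
  define M where "M = PiM {..<N} (\<lambda>_. \<pi>)"
  define ER where "ER = entropic_risk g \<beta> P X"
  define S where "S = {xs \<in> space M. ER \<le> (INF p \<in> UNIV \<times> {0<..}.
                     ereal (Max ((\<lambda>k. Lfun g \<beta> (xs k) (fst p) (snd p)) ` {..<N}) * (1 - \<epsilon>)
                            + u_b (fst p) (snd p) * \<epsilon>))}"
  have pM: "prob_space M" unfolding M_def by (rule prob_space_PiM) (rule \<pi>.prob_space_axioms)
  interpret M: prob_space M by (rule pM)
  show ?thesis
  proof (cases "\<epsilon> = 0 \<or> N = 0")
    case True
    then show ?thesis by auto
  next
    case False
    then have eps: "0 < \<epsilon>" and N: "0 < N" using e0 by auto
    have s\<pi>: "sets \<pi> = sets borel" unfolding \<pi>_def by simp
    have sp\<pi>: "space \<pi> = UNIV" unfolding \<pi>_def by simp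
    define B where "B = {x. cdf \<pi> x < 1 - \<epsilon>}"
    have cdfm[measurable]: "cdf \<pi> \<in> borel_measurable borel"
      by (rule borel_measurable_mono) (simp add: mono_def \<pi>.cdf_nondecreasing)
    have Bm: "B \<in> sets borel"
    proof -
      have "{x \<in> space borel. cdf \<pi> x < 1 - \<epsilon>} \<in> sets borel" by measurable
      then show ?thesis by (simp add: B_def)
    qed
    have hB: "measure \<pi> B \<le> 1 - \<epsilon>" unfolding B_def by (rule cdf_bound[OF rd]) (use e1 eps in auto)
    define Bad where "Bad = PiE {..<N} (\<lambda>_. B)"
    have Badm: "Bad \<in> sets M" unfolding Bad_def M_def by (rule sets_PiM_I_finite) (auto simp: s\<pi> Bm)
    interpret PS: product_sigma_finite "\<lambda>_::nat. \<pi>"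
      by (simp add: product_sigma_finite_def prob_space_imp_sigma_finite \<pi>.prob_space_axioms)
    have mBad: "measure M Bad = measure \<pi> B ^ N"
    proof -
      have "emeasure M Bad = (\<Prod>i\<in>{..<N}. emeasure \<pi> B)"
        unfolding M_def Bad_def by (rule PS.emeasure_PiM) (auto simp: s\<pi> Bm)
      also have "\<dots> = ennreal (measure \<pi> B ^ N)"
        by (simp add: \<pi>.emeasure_eq_measure ennreal_power)
      finally show ?thesis by (simp add: M.emeasure_eq_measure)
    qed
    have compl: "measure M (space M - Bad) = 1 - measure M Bad" by (rule M.prob_compl[OF Badm])
    have spM: "space M = PiE {..<N} (\<lambda>_. UNIV)" unfolding M_def by (simp add: space_PiM sp\<pi>)
    have Sm: "S \<in> sets M"
    proof -
      define C where "C = {xs :: nat \<Rightarrow> real. ER \<le> (INF p \<in> UNIV \<times> {0<..}.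
                     ereal (Max ((\<lambda>k. Lfun g \<beta> (xs k) (fst p) (snd p)) ` {..<N}) * (1 - \<epsilon>)
                            + u_b (fst p) (snd p) * \<epsilon>))}"
      have "closed C" unfolding C_def by (rule closed_part[OF conj ng N])
      then have "C \<in> sets borel" by simp
      then have Cs: "C \<in> sets (PiM UNIV (\<lambda>_::nat. borel::real measure))" using sets_PiM_equal_borel by blast
      have idm: "(\<lambda>\<omega> i. \<omega> i) \<in> measurable M (PiM UNIV (\<lambda>_::nat. borel::real measure))"
      proof (rule measurable_PiM_single')
        fix i :: nat
        show "(\<lambda>\<omega>. \<omega> i) \<in> measurable M borel"
        proof (cases "i < N")
          case True
          have "(\<lambda>\<omega>. \<omega> i) \<in> measurable M \<pi>" unfolding M_def
            by (rule measurable_component_singleton) (use True in simp)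
          then show ?thesis using measurable_cong_sets[OF refl s\<pi>] by blast
        next
          case False
          have eqf: "\<And>\<omega>. \<omega> \<in> space M \<Longrightarrow> \<omega> i = undefined"
            using False by (auto simp: spM PiE_def extensional_def)
          show ?thesis
            using Sigma_Algebra.measurable_cong[of M "\<lambda>\<omega>. \<omega> i" "\<lambda>\<omega>. undefined" borel] eqf by simp
        qed
      qed simp
      have "(\<lambda>\<omega> i. \<omega> i) -` C \<inter> space M \<in> sets M" by (rule measurable_sets[OF idm Cs])
      moreover have "(\<lambda>\<omega> i. \<omega> i) -` C \<inter> space M = S" unfolding S_def C_def by auto
      ultimately show ?thesis by simp
    qed
    have sub: "space M - Bad \<subseteq> S"
    proof
      fix xs assume xs: "xs \<in> space M - Bad"
      then obtain k where k: "k < N" "xs k \<notin> B"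
        by (auto simp: Bad_def spM PiE_def)
      define s where "s = xs k"
      have hk: "1 - \<epsilon> \<le> cdf \<pi> s" using k by (simp add: B_def s_def)
      have "ER \<le> (INF p \<in> UNIV \<times> {0<..}.
                     ereal (Max ((\<lambda>k. Lfun g \<beta> (xs k) (fst p) (snd p)) ` {..<N}) * (1 - \<epsilon>)
                            + u_b (fst p) (snd p) * \<epsilon>))"
        unfolding ER_def entropic_risk_def
      proof (rule INF_greatest, clarsimp)
        fix \<mu> t :: real assume t: "0 < t"
        let ?Mx = "Max ((\<lambda>k. Lfun g \<beta> (xs k) \<mu> t) ` {..<N})"
        let ?u = "u_b \<mu> t"
        let ?Ls = "Lfun g \<beta> s \<mu> t"
        have MxLs: "?Ls \<le> ?Mx" unfolding s_def by (rule Max_ge) (use k in auto)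
        have ub: "AE w in P. Lfun g \<beta> (X w) \<mu> t \<le> ?u"
          by (rule AE_distrD[OF Xm]) (use ubD t in auto)
        have ell: "AE w in P. X w \<le> ell" by (rule AE_distrD[OF Xm ellD])
        show "(SUP Q \<in> ambiguity_set g \<beta> P. ext_integral Q (\<lambda>w. ereal (X w)))
               \<le> ereal (?Mx * (1 - \<epsilon>) + ?u * \<epsilon>)"
        proof (rule SUP_least)
          fix Q assume Q: "Q \<in> ambiguity_set g \<beta> P"
          show "ext_integral Q (\<lambda>w. ereal (X w)) \<le> ereal (?Mx * (1 - \<epsilon>) + ?u * \<epsilon>)"
          proof (cases "?Ls \<le> ?u")
            case True
            define A where "A = {w \<in> space P. X w \<le> s}"
            have Am: "A \<in> sets P" unfolding A_def by measurable
            have mA: "measure P A = cdf \<pi> s"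
              unfolding cdf_def2 \<pi>_def A_def by (subst measure_distr) (auto intro!: arg_cong[where f="measure P"])
            have a1: "measure P A \<le> 1" by (rule P.prob_le_1)
            have c1: "ext_integral Q (\<lambda>w. ereal (X w)) \<le> ereal (measure P A * ?Ls + (1 - measure P A) * ?u)"
              by (rule core[OF Pp Xm ell Q g conj t ub Am]) (auto simp: A_def)
            have "(1 - \<epsilon>) * (?u - ?Ls) \<le> measure P A * (?u - ?Ls)"
              by (rule mult_right_mono) (use hk mA True in auto)
            moreover have "(1 - \<epsilon>) * ?Ls \<le> (1 - \<epsilon>) * ?Mx"
              by (rule mult_left_mono[OF MxLs]) (use e1 in auto)
            ultimately have "measure P A * ?Ls + (1 - measure P A) * ?u \<le> ?Mx * (1 - \<epsilon>) + ?u * \<epsilon>"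
              by (simp add: algebra_simps)
            then show ?thesis using c1 by (meson ereal_less_eq(3) order_trans)
          next
            case False
            have c1: "ext_integral Q (\<lambda>w. ereal (X w)) \<le> ereal (measure P {} * ?Ls + (1 - measure P {}) * ?u)"
              by (rule core[OF Pp Xm ell Q g conj t ub]) auto
            have "(1 - \<epsilon>) * ?u \<le> (1 - \<epsilon>) * ?Mx"
              by (rule mult_left_mono) (use e1 MxLs False in auto)
            then have "?u \<le> ?Mx * (1 - \<epsilon>) + ?u * \<epsilon>" by (simp add: algebra_simps)
            then show ?thesis using c1 by (simp add: order_trans)
          qed
        qed
      qed
      then show "xs \<in> S" using xs by (simp add: S_def)
    qed
    have "measure M (space M - Bad) \<le> measure M S" by (rule M.finite_measure_mono[OF sub Sm])
    moreover have "measure \<pi> B ^ N \<le> (1 - \<epsilon>) ^ N" by (rule power_mono[OF hB]) simp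
    ultimately have "1 - (1 - \<epsilon>) ^ N \<le> measure M S" using compl mBad by simp
    then show ?thesis by (simp add: S_def M_def ER_def \<pi>_def)
  qed
qed

end
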